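(* Let $m\ge 2$ and let $\mathbb N$ be the directed cycle $1\to2\to\cdots\to m\to 1$, where for each $i\in\{1,\dots,m\}$ the arc from $i-1$ to $i$ (with the convention that vertex $0$ is vertex $m$) carries the matrix $C_i$ with $n$ columns, and $\mathcal K_i=\ker C_i$. Then $\bar{\mathbb N}$ is well-configured, i.e. for all $x_1,\dots,x_m\in\mathbb R^n$ (with $x_0:=x_m$) the relations $C_ix_i=C_ix_{i-1}$, $i=1,\dots,m$, imply $x_1=\cdots=x_m$, if and only if $\{\mathcal K_1,\dots,\mathcal K_m\}$ is an independent family.
   Context: A finite indexed family of subspaces $\{\mathcal S_1,\dots,\mathcal S_p\}$ of $\mathbb R^n$ is independent if $\mathcal S_i\cap\sum_{j\ne i}\mathcal S_j=0$ for every $i$. *)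

theory Defs
  imports "HOL-Analysis.Analysis"
begin

text \<open>A matrix with r rows and n columns is given by its entries A k j
  (row k < r, column j, columns indexed by the finite type 'n); its product
  with x in R^n is the vector in R^r, represented as a function on rows
  (zero outside the row range).\<close>
definition mat_mult_vec :: "nat \<Rightarrow> (nat \<Rightarrow> 'n::finite \<Rightarrow> real) \<Rightarrow> real^'n \<Rightarrow> (nat \<Rightarrow> real)" where
  "mat_mult_vec r A x = (\<lambda>k. if k < r then (\<Sum>j\<in>UNIV. A k j * x $ j) else 0)"

definition mat_kernel :: "nat \<Rightarrow> (nat \<Rightarrow> 'n::finite \<Rightarrow> real) \<Rightarrow> (real^'n) set" where
  "mat_kernel r A = {x. mat_mult_vec r A x = (\<lambda>k. 0)}"

definition subspace_sum :: "('i \<Rightarrow> 'a::comm_monoid_add set) \<Rightarrow> 'i set \<Rightarrow> 'a set" where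
  "subspace_sum S J = {(\<Sum>j\<in>J. v j) | v. \<forall>j\<in>J. v j \<in> S j}"

definition independent_family :: "('i \<Rightarrow> 'a::comm_monoid_add set) \<Rightarrow> 'i set \<Rightarrow> bool" where
  "independent_family S I \<longleftrightarrow> (\<forall>i\<in>I. S i \<inter> subspace_sum S (I - {i}) = {0})"

definition cyc_pred :: "nat \<Rightarrow> nat \<Rightarrow> nat" where
  "cyc_pred m i = (if i = 1 then m else i - 1)"

definition well_configured_cycle ::
  "nat \<Rightarrow> (nat \<Rightarrow> nat) \<Rightarrow> (nat \<Rightarrow> nat \<Rightarrow> 'n::finite \<Rightarrow> real) \<Rightarrow> bool" where
  "well_configured_cycle m r C \<longleftrightarrow>
     (\<forall>x :: nat \<Rightarrow> real^'n.
        (\<forall>i\<in>{1..m}. mat_mult_vec (r i) (C i) (x i) = mat_mult_vec (r i) (C i) (x (cyc_pred m i)))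
        \<longrightarrow> (\<forall>i\<in>{1..m}. \<forall>j\<in>{1..m}. x i = x j))"

end

theory Submission
  imports Defs
begin

lemma mmv_diff: "mat_mult_vec r A (x - y) = (\<lambda>k. mat_mult_vec r A x k - mat_mult_vec r A y k)"
  by (auto simp: mat_mult_vec_def algebra_simps sum_subtractf)

lemma mmv_add: "mat_mult_vec r A (x + y) = (\<lambda>k. mat_mult_vec r A x k + mat_mult_vec r A y k)"
  by (auto simp: mat_mult_vec_def algebra_simps sum.distrib)

lemma mmv_neg: "mat_mult_vec r A (- x) = (\<lambda>k. - mat_mult_vec r A x k)"
  by (auto simp: mat_mult_vec_def sum_negf)

lemma ker_zero: "0 \<in> mat_kernel r A"
  by (auto simp: mat_kernel_def mat_mult_vec_def)

lemma ker_neg: "x \<in> mat_kernel r A \<Longrightarrow> - x \<in> mat_kernel r A"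
  by (auto simp: mat_kernel_def mmv_neg)

lemma ker_iff: "x - y \<in> mat_kernel r A \<longleftrightarrow> mat_mult_vec r A x = mat_mult_vec r A y"
  by (auto simp: mat_kernel_def mmv_diff fun_eq_iff)

lemma ker_sum: "finite J \<Longrightarrow> (\<forall>j\<in>J. v j \<in> mat_kernel r A) \<Longrightarrow> sum v J \<in> mat_kernel r A"
proof (induction J rule: finite_induct)
  case empty then show ?case by (simp add: ker_zero)
next
  case (insert a F) then show ?case by (auto simp: mat_kernel_def mmv_add fun_eq_iff)
qed

lemma telescope:
  fixes x :: "nat \<Rightarrow> 'a::ab_group_add"
  assumes "m \<ge> 2"
  shows "(\<Sum>k\<in>{1..m}. x k - x (cyc_pred m k)) = 0"
proof -
  have "(\<Sum>k\<in>{1..m}. x (cyc_pred m k)) = x m + (\<Sum>k\<in>{2..m}. x (k - 1))"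
  proof -
    have "{1..m} = insert 1 {2..m}" using assms by auto
    then have "(\<Sum>k\<in>{1..m}. x (cyc_pred m k)) = x (cyc_pred m 1) + (\<Sum>k\<in>{2..m}. x (cyc_pred m k))"
      by simp
    also have "(\<Sum>k\<in>{2..m}. x (cyc_pred m k)) = (\<Sum>k\<in>{2..m}. x (k - 1))"
      by (rule sum.cong) (auto simp: cyc_pred_def)
    finally show ?thesis by (simp add: cyc_pred_def)
  qed
  also have "(\<Sum>k\<in>{2..m}. x (k - 1)) = (\<Sum>k\<in>{1..m-1}. x k)"
  proof -
    have "(\<Sum>k\<in>{1..m-1}. x k) = (\<Sum>k\<in>{Suc 1..Suc (m-1)}. x (k - 1))"
      by (subst sum.shift_bounds_cl_Suc_ivl) simp
    then show ?thesis using assms by (simp add: numeral_2_eq_2)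
  qed
  also have "x m + (\<Sum>k\<in>{1..m-1}. x k) = (\<Sum>k\<in>{1..m}. x k)"
  proof -
    have "{1..m} = insert m {1..m-1}" using assms by auto
    moreover have "m \<notin> {1..m-1}" using assms by auto
    ultimately show ?thesis by simp
  qed
  finally show ?thesis by (simp add: sum_subtractf)
qed

theorem lemma2:
  fixes m :: nat and r :: "nat \<Rightarrow> nat" and C :: "nat \<Rightarrow> nat \<Rightarrow> 'n::finite \<Rightarrow> real"
  assumes "m \<ge> 2"
  shows "well_configured_cycle m r C \<longleftrightarrow>
         independent_family (\<lambda>i. mat_kernel (r i) (C i)) {1..m}"
proof
  let ?K = "\<lambda>i. mat_kernel (r i) (C i)"
  assume wc: "well_configured_cycle m r C"
  show "independent_family ?K {1..m}"
    unfolding independent_family_def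
  proof (intro ballI equalityI subsetI)
    fix i assume i: "i \<in> {1..m}"
    show "v \<in> ?K i \<inter> subspace_sum ?K ({1..m} - {i})" if "v \<in> {0}" for v
      using that ker_zero[of "r i" "C i"]
      by (auto simp: subspace_sum_def intro!: exI[of _ "\<lambda>_. 0"] ker_zero)
    fix v assume v: "v \<in> ?K i \<inter> subspace_sum ?K ({1..m} - {i})"
    then obtain w where w: "\<forall>j\<in>{1..m} - {i}. w j \<in> ?K j"
      and vw: "v = (\<Sum>j\<in>{1..m} - {i}. w j)"
      by (auto simp: subspace_sum_def)
    define d where "d = (\<lambda>j. if j = i then - v else w j)"
    have dK: "\<forall>j\<in>{1..m}. d j \<in> ?K j" using w v by (auto simp: d_def ker_neg)
    have dsum: "(\<Sum>j\<in>{1..m}. d j) = 0"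
    proof -
      have "(\<Sum>j\<in>{1..m}. d j) = d i + (\<Sum>j\<in>{1..m} - {i}. d j)"
        using i by (simp add: sum.remove)
      also have "(\<Sum>j\<in>{1..m} - {i}. d j) = v" unfolding vw
        by (rule sum.cong) (auto simp: d_def)
      finally show ?thesis by (simp add: d_def)
    qed
    define x where "x = (\<lambda>k. \<Sum>j\<in>{1..k}. d j)"
    have xm: "x m = 0" using dsum by (simp add: x_def)
    have step: "x k - x (cyc_pred m k) = d k" if kk: "k \<in> {1..m}" for k
    proof (cases "k = 1")
      case True
      have c: "cyc_pred m k = m" using True by (simp add: cyc_pred_def)
      have "x 1 = d 1" by (simp add: x_def)
      then show ?thesis using True c xm by simp
    next
      case False
      obtain k' where k': "k = Suc k'" "k' \<ge> 1" using kk False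
        by (intro that[of "k - 1"]) auto
      show ?thesis using False k' by (simp add: cyc_pred_def x_def)
    qed
    have "\<forall>i\<in>{1..m}. \<forall>j\<in>{1..m}. x i = x j"
    proof -
      have "\<forall>k\<in>{1..m}. mat_mult_vec (r k) (C k) (x k) = mat_mult_vec (r k) (C k) (x (cyc_pred m k))"
      proof
        fix k assume k: "k \<in> {1..m}"
        have "x k - x (cyc_pred m k) \<in> ?K k" using step[OF k] dK k by simp
        then show "mat_mult_vec (r k) (C k) (x k) = mat_mult_vec (r k) (C k) (x (cyc_pred m k))"
          by (simp only: ker_iff)
      qed
      then show ?thesis using wc unfolding well_configured_cycle_def by blast
    qed
    moreover have "cyc_pred m i \<in> {1..m}" using i assms by (auto simp: cyc_pred_def)
    ultimately have "x i = x (cyc_pred m i)" using i by blast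
    then have "d i = 0" using step[OF i] by simp
    then show "v \<in> {0}" by (simp add: d_def)
  qed
next
  let ?K = "\<lambda>i. mat_kernel (r i) (C i)"
  assume ind: "independent_family ?K {1..m}"
  show "well_configured_cycle m r C"
    unfolding well_configured_cycle_def
  proof (intro allI impI)
    fix x :: "nat \<Rightarrow> real^'n"
    assume hx: "\<forall>i\<in>{1..m}. mat_mult_vec (r i) (C i) (x i) = mat_mult_vec (r i) (C i) (x (cyc_pred m i))"
    define d where "d = (\<lambda>k. x k - x (cyc_pred m k))"
    have dK: "\<forall>k\<in>{1..m}. d k \<in> ?K k" using hx by (simp add: d_def ker_iff)
    have dsum: "(\<Sum>k\<in>{1..m}. d k) = 0" unfolding d_def by (rule telescope[OF assms])
    have d0: "d i = 0" if i: "i \<in> {1..m}" for i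
    proof -
      have "(\<Sum>k\<in>{1..m}. d k) = d i + (\<Sum>k\<in>{1..m} - {i}. d k)"
        using i by (simp add: sum.remove)
      then have e: "- d i = (\<Sum>k\<in>{1..m} - {i}. d k)" using dsum by (metis add.commute add_eq_0_iff)
      have "- d i \<in> subspace_sum ?K ({1..m} - {i})"
        unfolding subspace_sum_def e using dK by blast
      moreover have "- d i \<in> ?K i" using dK i ker_neg by blast
      ultimately have "- d i \<in> {0}" using ind i unfolding independent_family_def by blast
      then show ?thesis by simp
    qed
    have all1: "x k = x 1" if "k \<in> {1..m}" for k
      using that
    proof (induction k)
      case 0 then show ?case by simp
    next
      case (Suc k)
      show ?case
      proof (cases "k = 0")
        case True then show ?thesis by simp
      next
        case False
        then have "d (Suc k) = 0" using Suc.prems d0 by blast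
        then have "x (Suc k) = x k" using False by (simp add: d_def cyc_pred_def)
        then show ?thesis using Suc False by simp
      qed
    qed
    show "\<forall>i\<in>{1..m}. \<forall>j\<in>{1..m}. x i = x j" using all1 by (metis (no_types))
  qed
qed

end
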